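(* For $i\in\mathbb N$ and $j\in\mathbb N$ define $$l_{i,j}=\sum_{k=0}^{i-j}\binom{\frac{i-1}{2}+x-k}{k}\binom{\frac{i-1}{2}+k-x}{i-j-k}$$ (a quantity independent of $x$; equal to $0$ when $j>i$, as an empty sum). Then $l_{i,0}=(-1)^i$ and $l_{i,i}=1$ for all $i\in\mathbb N$, and $l_{i,j}=l_{i-1,j-1}+l_{i-1,j}$ for all $i\ge1$ and $1\le j\le i$.
   Context: For $z\in\mathbb C$ and $k\in\mathbb N$, $\binom{z}{k}=\frac{z(z-1)\cdots(z-k+1)}{k!}$. The sum defining $l_{i,j}$ is a polynomial in $x$ which is constant in $x$, so $l_{i,j}$ is a well-defined number (e.g. its value at $x=0$). *)

theory Defs
  imports Complex_Main
begin

definition lsum :: "nat \<Rightarrow> nat \<Rightarrow> complex \<Rightarrow> complex" where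
  "lsum i j x = (if j \<le> i then
     (\<Sum>k::nat = 0..i - j.
        (((of_nat i - 1) / 2 + x - of_nat k) gchoose k)
      * (((of_nat i - 1) / 2 + of_nat k - x) gchoose (i - j - k)))
   else 0)"

text \<open>l(i,j): the (x-independent) value, taken at x = 0.\<close>
definition l :: "nat \<Rightarrow> nat \<Rightarrow> complex" where
  "l i j = lsum i j 0"

end

theory Submission
  imports Defs "HOL-Computational_Algebra.Polynomial"
begin

definition S :: "complex \<Rightarrow> complex \<Rightarrow> nat \<Rightarrow> complex" where
  "S A B n = (\<Sum>k\<le>n. ((A - of_nat k) gchoose k) * ((B + of_nat k) gchoose (n - k)))"

lemma S0[simp]: "S A B 0 = 1"
  by (simp add: S_def)

lemma rule2: "S A B (Suc n) = S A (B-1) (Suc n) + S A (B-1) n"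
proof -
  have "S A B (Suc n) = (\<Sum>k\<le>n. ((A - of_nat k) gchoose k) * ((B + of_nat k) gchoose (Suc n - k)))
        + ((A - of_nat (Suc n)) gchoose (Suc n))"
    by (simp add: S_def)
  also have "(\<Sum>k\<le>n. ((A - of_nat k) gchoose k) * ((B + of_nat k) gchoose (Suc n - k)))
     = (\<Sum>k\<le>n. ((A - of_nat k) gchoose k) * ((B - 1 + of_nat k) gchoose (Suc n - k)))
       + (\<Sum>k\<le>n. ((A - of_nat k) gchoose k) * ((B - 1 + of_nat k) gchoose (n - k)))"
  proof -
    have "\<And>k. k \<le> n \<Longrightarrow> ((B + of_nat k) gchoose (Suc n - k)) =
       ((B - 1 + of_nat k) gchoose (Suc n - k)) + ((B - 1 + of_nat k) gchoose (n - k))"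
    proof -
      fix k assume "k \<le> n"
      hence e: "Suc n - k = Suc (n - k)" by simp
      have "B + of_nat k = (B - 1 + of_nat k) + 1" by simp
      thus "?thesis k" unfolding e by (metis gbinomial_Suc_Suc add.commute)
    qed
    thus ?thesis by (simp add: distrib_left sum.distrib)
  qed
  finally show ?thesis by (simp add: S_def)
qed

lemma rule1: "S A B (Suc n) = S (A-1) B (Suc n) + S (A-2) (B+1) n"
proof -
  have s: "\<And>C D. S C D (Suc n) = ((D) gchoose (Suc n)) +
     (\<Sum>k\<le>n. ((C - of_nat (Suc k)) gchoose (Suc k)) * ((D + of_nat (Suc k)) gchoose (n - k)))"
    unfolding S_def by (subst sum.atMost_Suc_shift) simp
  have "\<And>k. ((A - of_nat (Suc k)) gchoose (Suc k)) =
     ((A - 1 - of_nat (Suc k)) gchoose (Suc k)) + ((A - 2 - of_nat k) gchoose k)"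
  proof -
    fix k
    have "A - of_nat (Suc k) = (A - 1 - of_nat (Suc k)) + 1" by simp
    moreover have "A - 1 - of_nat (Suc k) = A - 2 - of_nat k" by simp
    ultimately show "?thesis k" by (metis gbinomial_Suc_Suc add.commute)
  qed
  hence "S A B (Suc n) = S (A-1) B (Suc n) +
     (\<Sum>k\<le>n. ((A - 2 - of_nat k) gchoose k) * ((B + of_nat (Suc k)) gchoose (n - k)))"
    by (simp add: s distrib_right sum.distrib)
  also have "(\<Sum>k\<le>n. ((A - 2 - of_nat k) gchoose k) * ((B + of_nat (Suc k)) gchoose (n - k)))
     = S (A-2) (B+1) n"
    unfolding S_def by (intro sum.cong) (simp_all add: algebra_simps)
  finally show ?thesis .
qed

lemma shift1: "S A B n = S (A+1) (B-1) n"
proof (induction n arbitrary: A B)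
  case 0 thus ?case by simp
next
  case (Suc n)
  have "S (A+1) (B-1) (Suc n) = S A (B-1) (Suc n) + S (A-1) B n"
    using rule1[of "A+1" "B-1" n] by (simp add: algebra_simps)
  moreover have "S (A-1) B n = S A (B-1) n" using Suc.IH[of "A-1" B] by simp
  ultimately show ?case using rule2[of A B n] by simp
qed

lemma shiftn: "S A B n = S (A + of_nat m) (B - of_nat m) n"
proof (induction m)
  case 0 thus ?case by simp
next
  case (Suc m)
  thus ?case using shift1[of "A + of_nat m" "B - of_nat m" n] by (simp add: algebra_simps)
qed

lemma gchoose_poly: "\<exists>p. \<forall>t. poly p t = ((a + b * t) gchoose k :: complex)"
proof
  show "\<forall>t. poly (smult (1 / fact k) (\<Prod>i\<in>{0..<k}. [:a - of_nat i, b:])) t = ((a + b * t) gchoose k)"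
    by (simp add: gbinomial_prod_rev poly_prod algebra_simps)
qed

lemma S_poly: "\<exists>p. \<forall>t. poly p t = S (A + t) (B - t) n"
proof -
  have "\<forall>k. \<exists>p. \<forall>t. poly p t = ((A - of_nat k + 1 * t) gchoose k) * ((B + of_nat k + (-1) * t) gchoose (n - k))"
  proof
    fix k
    obtain p where p: "\<forall>t. poly p t = ((A - of_nat k + 1 * t) gchoose k)" using gchoose_poly by blast
    obtain q where q: "\<forall>t. poly q t = ((B + of_nat k + (-1) * t) gchoose (n - k))" using gchoose_poly by blast
    show "\<exists>p. \<forall>t. poly p t = ((A - of_nat k + 1 * t) gchoose k) * ((B + of_nat k + (-1) * t) gchoose (n - k))"
      using p q by (intro exI[of _ "p*q"]) simp
  qed
  then obtain P where P: "\<And>k t. poly (P k) t = ((A - of_nat k + 1 * t) gchoose k) * ((B + of_nat k + (-1) * t) gchoose (n - k))"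
    by metis
  show ?thesis
    by (rule exI[of _ "\<Sum>k\<le>n. P k"]) (simp add: poly_sum P S_def algebra_simps)
qed

lemma S_shift: "S (A + t) (B - t) n = S A B n"
proof -
  obtain p where p: "\<And>t. poly p t = S (A + t) (B - t) n" using S_poly by blast
  define G where "G = p - [:S A B n:]"
  have roots: "range (of_nat :: nat \<Rightarrow> complex) \<subseteq> {x. poly G x = 0}"
    using shiftn[of A B n] by (auto simp: G_def p)
  have "G = 0"
  proof (rule ccontr)
    assume "G \<noteq> 0"
    hence "finite {x. poly G x = 0}" by (rule poly_roots_finite)
    hence "finite (range (of_nat :: nat \<Rightarrow> complex))" using roots finite_subset by blast
    moreover have "inj (of_nat :: nat \<Rightarrow> complex)" by (simp add: inj_on_def)
    ultimately show False using finite_imageD by blast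
  qed
  hence "poly G t = 0" by simp
  thus ?thesis by (simp add: G_def p)
qed

lemma l_S: "j \<le> i \<Longrightarrow> l i j = S ((of_nat i - 1)/2) ((of_nat i - 1)/2) (i - j)"
  unfolding l_def lsum_def S_def by (simp add: atLeast0AtMost)

lemma S_col0: "S (of_nat i - 1) 0 i = (-1) ^ i"
proof (cases i)
  case 0 thus ?thesis by simp
next
  case (Suc i')
  have last: "(of_nat i - 1 - of_nat i) gchoose i = ((-1::complex) ^ i)"
    using gbinomial_minus[of "1::complex" i] binomial_gbinomial[of i i, where 'a=complex] by simp
  have rest: "(\<Sum>k\<le>i'. ((of_nat i - 1 - of_nat k) gchoose k) * ((0 + of_nat k) gchoose (i - k))) = (0::complex)"
  proof (rule sum.neutral, intro ballI)
    fix k assume "k \<in> {..i'}"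
    hence k: "k \<le> i'" by simp
    have e: "(of_nat i - 1 - of_nat k :: complex) = of_nat (i' - k)" using k Suc by (simp add: of_nat_diff)
    have "(i' - k) choose k = 0 \<or> k choose (i - k) = 0" using k Suc by auto
    thus "((of_nat i - 1 - of_nat k) gchoose k) * ((0 + of_nat k) gchoose (i - k)) = (0::complex)"
      unfolding e by (auto simp flip: binomial_gbinomial)
  qed
  have "S (of_nat i - 1) 0 i = (\<Sum>k\<le>i'. ((of_nat i - 1 - of_nat k) gchoose k) * ((0 + of_nat k) gchoose (i - k)))
      + ((of_nat i - 1 - of_nat i) gchoose i) * ((0 + of_nat i) gchoose (i - i))"
    unfolding S_def Suc by simp
  thus ?thesis using rest last by simp
qed

theorem proposition4p4:
  shows "(\<forall>i. l i 0 = (-1) ^ i) \<and> (\<forall>i. l i i = 1) \<and>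
         (\<forall>i j. 1 \<le> i \<and> 1 \<le> j \<and> j \<le> i \<longrightarrow> l i j = l (i - 1) (j - 1) + l (i - 1) j)"
proof (intro conjI allI impI)
  fix i :: nat
  have "l i 0 = S ((of_nat i - 1)/2) ((of_nat i - 1)/2) i" by (simp add: l_S)
  also have "\<dots> = S ((of_nat i - 1)/2 + (of_nat i - 1)/2) ((of_nat i - 1)/2 - (of_nat i - 1)/2) i"
    by (rule S_shift[symmetric])
  also have "\<dots> = S (of_nat i - 1) 0 i" by simp
  finally show "l i 0 = (-1) ^ i" using S_col0 by simp
next
  fix i :: nat show "l i i = 1" by (simp add: l_S)
next
  fix i j :: nat assume a: "1 \<le> i \<and> 1 \<le> j \<and> j \<le> i"
  then obtain i' j' where ij: "i = Suc i'" "j = Suc j'" "j' \<le> i'"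
    by (metis Suc_le_D Suc_le_mono One_nat_def)
  show "l i j = l (i - 1) (j - 1) + l (i - 1) j"
  proof (cases "j' = i'")
    case True thus ?thesis using ij by (simp add: l_S l_def lsum_def)
  next
    case False
    then obtain m where m: "i' - j' = Suc m" using ij by (metis Suc_diff_Suc le_neq_implies_less)
    define c where "c = (of_nat i' - 1) / (2::complex)"
    have ci: "(of_nat i - 1)/2 = c + 1/2" using ij by (simp add: c_def field_simps)
    have sh: "\<And>n. S (c + 1/2) (c + 1/2 - 1) n = S c c n"
      using S_shift[of c "1/2" c] by (simp add: algebra_simps)
    have imj: "i - j = Suc m" using ij m by simp
    have "l i j = S ((of_nat i - 1)/2) ((of_nat i - 1)/2) (Suc m)" using l_S[of j i] a unfolding imj by blast
    hence "l i j = S (c + 1/2) (c + 1/2) (Suc m)" unfolding ci .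
    also have "\<dots> = S c c (Suc m) + S c c m" using rule2[of "c+1/2" "c+1/2" m] sh[of "Suc m"] sh[of m] by simp
    finally have L: "l i j = S c c (Suc m) + S c c m" .
    moreover have "l (i - 1) (j - 1) = S c c (Suc m)" using ij m by (simp add: l_S c_def)
    moreover have "l (i - 1) j = S c c m" proof -
      have mm: "i' - Suc j' = m" using m by simp
      have "Suc j' \<le> i'" using m by simp
      thus ?thesis using ij mm by (simp add: l_S c_def)
    qed
    ultimately show ?thesis using L by simp
  qed
qed

end
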